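(* Let $(A,\rho)$ be an anchored vector bundle. Let $\mathrm{End}(\mathcal{C}(A))$ be the set of pairs $\Phi=(\phi,\omega)$, where $\phi:A\to A$ is an anchored vector bundle endomorphism and $\omega$ is an even $(1,2)$-tensor, i.e. an even $C^\infty(M)$-bilinear map $\omega:\underline{\mathrm{Sec}}(A)\times\underline{\mathrm{Sec}}(A)\to\underline{\mathrm{Sec}}(A)$. Each such $\Phi$ acts on linear connections by $(\Phi\nabla)_u v:=\nabla_{\phi(u)}v+\omega(u,v)$. Equip $\mathrm{End}(\mathcal{C}(A))$ with the ternary operation defined by $$([\Phi^{(1)},\Phi^{(2)},\Phi^{(3)}]\nabla)_u v:=[\Phi^{(1)}\nabla,\Phi^{(2)}\nabla,\Phi^{(3)}\nabla]_u v=\nabla_{\phi^{(1)}u}v-\nabla_{\phi^{(2)}u}v+\nabla_{\phi^{(3)}u}v+\omega^{(1)}(u,v)-\omega^{(2)}(u,v)+\omega^{(3)}(u,v)$$ (equivalently, $[\Phi^{(1)},\Phi^{(2)},\Phi^{(3)}]=(\phi^{(1)}-\phi^{(2)}+\phi^{(3)},\ \omega^{(1)}-\omega^{(2)}+\omega^{(3)})$) and the binary product $\Phi\circ\Phi':=(\phi\circ\phi',\ \omega+\omega')$ for $\Phi=(\phi,\omega)$, $\Phi'=(\phi',\omega')$. Then $\mathrm{End}(\mathcal{C}(A))$ with these operations is a truss.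
   Context: All objects are $\mathbb{Z}_2$-graded (supergeometry); the Grassmann parity of an object $x$ is denoted $\widetilde{x}\in\mathbb{Z}_2$. An anchored vector bundle is a vector bundle $\pi: A\to M$ of supermanifolds with a vector bundle homomorphism over the identity $\rho: A\to\mathsf{T}M$; it induces an even $C^\infty(M)$-module map $\rho:\underline{\mathrm{Sec}}(A)\to\mathrm{Vect}(M)$, $\rho_u:=\rho(u)$. An anchored vector bundle endomorphism is a vector bundle map $\phi:A\to A$ over the identity with $\rho\circ\phi=\rho$. A linear connection on $(A,\rho)$ is an $\mathbb{R}$-bilinear map $\nabla:\underline{\mathrm{Sec}}(A)\times\underline{\mathrm{Sec}}(A)\to\underline{\mathrm{Sec}}(A)$ with $\widetilde{\nabla_u v}=\widetilde u+\widetilde v$, $\nabla_{fu}v=f\nabla_u v$, and $\nabla_u(fv)=\rho_u(f)v+(-1)^{\widetilde u\widetilde f}f\nabla_u v$ for all $f\in C^\infty(M)$ and sections $u,v$. The set of linear connections $\mathcal{C}(A)$ carries the ternary operation $[\nabla^{(1)},\nabla^{(2)},\nabla^{(3)}]:=\nabla^{(1)}-\nabla^{(2)}+\nabla^{(3)}$. A heap is a set with a ternary operation $[a,b,c]$ that is para-associative, $[[a,b,c],d,e]=[a,[d,c,b],e]=[a,b,[c,d,e]]$, with $[a,b,b]=a=[b,b,a]$; it is abelian if $[a,b,c]=[c,b,a]$. A truss is an abelian heap together with an associative binary operation $\cdot$ that distributes over the ternary operation from both sides: $a\cdot[b,c,d]=[a\cdot b,a\cdot c,a\cdot d]$ and $[b,c,d]\cdot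 a=[b\cdot a,c\cdot a,d\cdot a]$. *)

theory Defs
  imports Main "HOL.Real_Vector_Spaces"
begin

(* Parities: False = even, True = odd; parity addition in Z_2 is (\<noteq>). *)

definition sgn_smult :: "bool \<Rightarrow> 's::ab_group_add \<Rightarrow> 's" where
  "sgn_smult b x = (if b then - x else x)"

definition heap :: "'a set \<Rightarrow> ('a \<Rightarrow> 'a \<Rightarrow> 'a \<Rightarrow> 'a) \<Rightarrow> bool" where
  "heap H t \<longleftrightarrow>
     (\<forall>a\<in>H. \<forall>b\<in>H. \<forall>c\<in>H. t a b c \<in> H) \<and>
     (\<forall>a\<in>H. \<forall>b\<in>H. \<forall>c\<in>H. \<forall>d\<in>H. \<forall>e\<in>H.
        t (t a b c) d e = t a (t d c b) e \<and> t a (t d c b) e = t a b (t c d e)) \<and>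
     (\<forall>a\<in>H. \<forall>b\<in>H. t a b b = a \<and> t b b a = a)"

definition abelian_heap :: "'a set \<Rightarrow> ('a \<Rightarrow> 'a \<Rightarrow> 'a \<Rightarrow> 'a) \<Rightarrow> bool" where
  "abelian_heap H t \<longleftrightarrow> heap H t \<and> (\<forall>a\<in>H. \<forall>b\<in>H. \<forall>c\<in>H. t a b c = t c b a)"

definition truss :: "'a set \<Rightarrow> ('a \<Rightarrow> 'a \<Rightarrow> 'a \<Rightarrow> 'a) \<Rightarrow> ('a \<Rightarrow> 'a \<Rightarrow> 'a) \<Rightarrow> bool" where
  "truss T t m \<longleftrightarrow> abelian_heap T t \<and>
     (\<forall>a\<in>T. \<forall>b\<in>T. m a b \<in> T) \<and>
     (\<forall>a\<in>T. \<forall>b\<in>T. \<forall>c\<in>T. m (m a b) c = m a (m b c)) \<and>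
     (\<forall>a\<in>T. \<forall>b\<in>T. \<forall>c\<in>T. \<forall>d\<in>T.
        m a (t b c d) = t (m a b) (m a c) (m a d) \<and>
        m (t b c d) a = t (m b a) (m c a) (m d a))"

(* Abstract algebraic model of an anchored vector bundle of supermanifolds:
   'r = C^\<infinity>(M) (a supercommutative real superalgebra, homogeneous parts hr),
   's = Sec(A) (a Z_2-graded module over 'r via sm, homogeneous parts hs),
   vector fields = derivations 'r \<Rightarrow> 'r, anchor rho : 's \<Rightarrow> ('r \<Rightarrow> 'r). *)

definition superalgebra :: "(bool \<Rightarrow> 'r::real_algebra_1 set) \<Rightarrow> bool" where
  "superalgebra hr \<longleftrightarrow>
     (\<forall>p. 0 \<in> hr p \<and> (\<forall>f\<in>hr p. \<forall>g\<in>hr p. f + g \<in> hr p \<and> - f \<in> hr p)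
         \<and> (\<forall>c f. f \<in> hr p \<longrightarrow> c *\<^sub>R f \<in> hr p)) \<and>
     1 \<in> hr False \<and>
     (\<forall>p q. \<forall>f\<in>hr p. \<forall>g\<in>hr q. f * g \<in> hr (p \<noteq> q)) \<and>
     (\<forall>f. \<exists>f0\<in>hr False. \<exists>f1\<in>hr True. f = f0 + f1) \<and>
     hr False \<inter> hr True = {0} \<and>
     (\<forall>p q. \<forall>f\<in>hr p. \<forall>g\<in>hr q. g * f = sgn_smult (p \<and> q) (f * g))"

definition supermodule ::
  "(bool \<Rightarrow> 'r::real_algebra_1 set) \<Rightarrow> ('r \<Rightarrow> 's::real_vector \<Rightarrow> 's) \<Rightarrow> (bool \<Rightarrow> 's set) \<Rightarrow> bool" where
  "supermodule hr sm hs \<longleftrightarrow>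
     (\<forall>f g u. sm (f + g) u = sm f u + sm g u) \<and>
     (\<forall>f u v. sm f (u + v) = sm f u + sm f v) \<and>
     (\<forall>f g u. sm (f * g) u = sm f (sm g u)) \<and>
     (\<forall>u. sm 1 u = u) \<and>
     (\<forall>c u. sm (of_real c) u = c *\<^sub>R u) \<and>
     (\<forall>p. 0 \<in> hs p \<and> (\<forall>u\<in>hs p. \<forall>v\<in>hs p. u + v \<in> hs p \<and> - u \<in> hs p)) \<and>
     (\<forall>p q. \<forall>f\<in>hr p. \<forall>u\<in>hs q. sm f u \<in> hs (p \<noteq> q)) \<and>
     (\<forall>u. \<exists>u0\<in>hs False. \<exists>u1\<in>hs True. u = u0 + u1) \<and>
     hs False \<inter> hs True = {0}"

definition derivation_of_parity :: "(bool \<Rightarrow> 'r::real_algebra_1 set) \<Rightarrow> bool \<Rightarrow> ('r \<Rightarrow> 'r) \<Rightarrow> bool" where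
  "derivation_of_parity hr p X \<longleftrightarrow>
     (\<forall>f g. X (f + g) = X f + X g) \<and>
     (\<forall>c f. X (c *\<^sub>R f) = c *\<^sub>R X f) \<and>
     (\<forall>q. \<forall>f\<in>hr q. X f \<in> hr (p \<noteq> q)) \<and>
     (\<forall>q. \<forall>f\<in>hr q. \<forall>g. X (f * g) = X f * g + sgn_smult (p \<and> q) (f * X g))"

definition anchored_vector_bundle ::
  "(bool \<Rightarrow> 'r::real_algebra_1 set) \<Rightarrow> ('r \<Rightarrow> 's::real_vector \<Rightarrow> 's) \<Rightarrow> (bool \<Rightarrow> 's set)
    \<Rightarrow> ('s \<Rightarrow> 'r \<Rightarrow> 'r) \<Rightarrow> bool" where
  "anchored_vector_bundle hr sm hs rho \<longleftrightarrow>
     superalgebra hr \<and> supermodule hr sm hs \<and>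
     (\<forall>u v. rho (u + v) = (\<lambda>g. rho u g + rho v g)) \<and>
     (\<forall>f u. rho (sm f u) = (\<lambda>g. f * rho u g)) \<and>
     (\<forall>p. \<forall>u\<in>hs p. derivation_of_parity hr p (rho u))"

definition anchored_endo ::
  "('r::real_algebra_1 \<Rightarrow> 's::real_vector \<Rightarrow> 's) \<Rightarrow> (bool \<Rightarrow> 's set) \<Rightarrow> ('s \<Rightarrow> 'r \<Rightarrow> 'r)
    \<Rightarrow> ('s \<Rightarrow> 's) \<Rightarrow> bool" where
  "anchored_endo sm hs rho \<phi> \<longleftrightarrow>
     (\<forall>u v. \<phi> (u + v) = \<phi> u + \<phi> v) \<and>
     (\<forall>f u. \<phi> (sm f u) = sm f (\<phi> u)) \<and>
     (\<forall>p. \<forall>u\<in>hs p. \<phi> u \<in> hs p) \<and>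
     (\<forall>u. rho (\<phi> u) = rho u)"

definition even_tensor12 ::
  "(bool \<Rightarrow> 'r::real_algebra_1 set) \<Rightarrow> ('r \<Rightarrow> 's::real_vector \<Rightarrow> 's) \<Rightarrow> (bool \<Rightarrow> 's set)
    \<Rightarrow> ('s \<Rightarrow> 's \<Rightarrow> 's) \<Rightarrow> bool" where
  "even_tensor12 hr sm hs \<omega> \<longleftrightarrow>
     (\<forall>u v w. \<omega> (u + v) w = \<omega> u w + \<omega> v w) \<and>
     (\<forall>u v w. \<omega> u (v + w) = \<omega> u v + \<omega> u w) \<and>
     (\<forall>f u v. \<omega> (sm f u) v = sm f (\<omega> u v)) \<and>
     (\<forall>p q. \<forall>u\<in>hs p. \<forall>f\<in>hr q. \<forall>v. \<omega> u (sm f v) = sgn_smult (p \<and> q) (sm f (\<omega> u v))) \<and>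
     (\<forall>p q. \<forall>u\<in>hs p. \<forall>v\<in>hs q. \<omega> u v \<in> hs (p \<noteq> q))"

definition End_C ::
  "(bool \<Rightarrow> 'r::real_algebra_1 set) \<Rightarrow> ('r \<Rightarrow> 's::real_vector \<Rightarrow> 's) \<Rightarrow> (bool \<Rightarrow> 's set)
    \<Rightarrow> ('s \<Rightarrow> 'r \<Rightarrow> 'r) \<Rightarrow> (('s \<Rightarrow> 's) \<times> ('s \<Rightarrow> 's \<Rightarrow> 's)) set" where
  "End_C hr sm hs rho = {(\<phi>, \<omega>). anchored_endo sm hs rho \<phi> \<and> even_tensor12 hr sm hs \<omega>}"

definition End_tern ::
  "('s::ab_group_add \<Rightarrow> 's) \<times> ('s \<Rightarrow> 's \<Rightarrow> 's) \<Rightarrow> ('s \<Rightarrow> 's) \<times> ('s \<Rightarrow> 's \<Rightarrow> 's)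
    \<Rightarrow> ('s \<Rightarrow> 's) \<times> ('s \<Rightarrow> 's \<Rightarrow> 's) \<Rightarrow> ('s \<Rightarrow> 's) \<times> ('s \<Rightarrow> 's \<Rightarrow> 's)" where
  "End_tern P1 P2 P3 =
     ((\<lambda>u. fst P1 u - fst P2 u + fst P3 u),
      (\<lambda>u v. snd P1 u v - snd P2 u v + snd P3 u v))"

definition End_comp ::
  "('s::ab_group_add \<Rightarrow> 's) \<times> ('s \<Rightarrow> 's \<Rightarrow> 's) \<Rightarrow> ('s \<Rightarrow> 's) \<times> ('s \<Rightarrow> 's \<Rightarrow> 's)
    \<Rightarrow> ('s \<Rightarrow> 's) \<times> ('s \<Rightarrow> 's \<Rightarrow> 's)" where
  "End_comp P Q = (fst P \<circ> fst Q, (\<lambda>u v. snd P u v + snd Q u v))"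

end

theory Submission
  imports Defs
begin

lemma add_tern:
  fixes f :: "'a::ab_group_add \<Rightarrow> 'b::ab_group_add"
  assumes "\<forall>u v. f (u + v) = f u + f v"
  shows "f (x - y + z) = f x - f y + f z"
proof -
  have a: "f (u + v) = f u + f v" for u v using assms by blast
  have "f 0 = 0" using a[of 0 0] by simp
  then have "f y + f (- y) = 0" using a[of y "- y"] by simp
  then have n: "f (- y) = - f y" by (metis add.commute eq_neg_iff_add_eq_0)
  show ?thesis using a[of "x + - y" z] a[of x "- y"] n by simp
qed

lemma sgn_tern: "sgn_smult b (x - y + z) = sgn_smult b x - sgn_smult b y + sgn_smult b z"
  by (simp add: sgn_smult_def)

lemma fun_tern:
  fixes f :: "'a::ab_group_add \<Rightarrow> 'c \<Rightarrow> 'b::ab_group_add"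
  assumes "\<forall>u v. f (u + v) = (\<lambda>g. f u g + f v g)"
  shows "f (x - y + z) = (\<lambda>g. f x g - f y g + f z g)"
proof -
  have "(\<lambda>x. f x g) (x - y + z) = (\<lambda>x. f x g) x - (\<lambda>x. f x g) y + (\<lambda>x. f x g) z" for g
    by (rule add_tern) (use assms in \<open>simp add: fun_eq_iff\<close>)
  then show ?thesis by (simp add: fun_eq_iff)
qed

lemma hs_tern:
  assumes "\<forall>u\<in>H. \<forall>v\<in>H. u + v \<in> H \<and> - u \<in> H" "x \<in> H" "y \<in> H" "z \<in> H"
  shows "(x::'s::ab_group_add) - y + z \<in> H"
proof -
  have "x + - y + z \<in> H" using assms by blast
  then show ?thesis by simp
qed

theorem mainTheorem6:
  fixes hr :: "bool \<Rightarrow> 'r::real_algebra_1 set"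
    and sm :: "'r \<Rightarrow> 's::real_vector \<Rightarrow> 's"
    and hs :: "bool \<Rightarrow> 's set"
    and rho :: "'s \<Rightarrow> 'r \<Rightarrow> 'r"
  assumes "anchored_vector_bundle hr sm hs rho"
  shows "truss (End_C hr sm hs rho) End_tern End_comp"
proof -
  have smadd: "\<forall>f u v. sm f (u + v) = sm f u + sm f v"
    and hsc: "\<forall>p. \<forall>u\<in>hs p. \<forall>v\<in>hs p. u + v \<in> hs p \<and> - u \<in> hs p"
    using assms unfolding anchored_vector_bundle_def supermodule_def by simp_all
  have rhoadd: "\<forall>u v. rho (u + v) = (\<lambda>g. rho u g + rho v g)"
    using assms unfolding anchored_vector_bundle_def by blast
  have smt: "sm f (x - y + z) = sm f x - sm f y + sm f z" for f x y z
    by (rule add_tern) (use smadd in blast)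
  have rhot: "rho (x - y + z) = (\<lambda>g. rho x g - rho y g + rho z g)" for x y z
    by (rule fun_tern[OF rhoadd])
  have hst: "x - y + z \<in> hs p" if "x \<in> hs p" "y \<in> hs p" "z \<in> hs p" for x y z p
    using hs_tern[of "hs p"] hsc that by blast
  have hsa: "x + y \<in> hs p" if "x \<in> hs p" "y \<in> hs p" for x y p
    using hsc that by blast
  have closT: "End_tern a b c \<in> End_C hr sm hs rho"
    if "a \<in> End_C hr sm hs rho" "b \<in> End_C hr sm hs rho" "c \<in> End_C hr sm hs rho" for a b c
  proof -
    obtain p1 w1 p2 w2 p3 w3 where e: "a = (p1, w1)" "b = (p2, w2)" "c = (p3, w3)"
      by (cases a, cases b, cases c) auto
    have A: "anchored_endo sm hs rho p1" "anchored_endo sm hs rho p2" "anchored_endo sm hs rho p3"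
      "even_tensor12 hr sm hs w1" "even_tensor12 hr sm hs w2" "even_tensor12 hr sm hs w3"
      using that e by (auto simp: End_C_def)
    have "anchored_endo sm hs rho (\<lambda>u. p1 u - p2 u + p3 u)"
      using A(1-3) unfolding anchored_endo_def
      apply (intro conjI allI ballI)
         apply (simp add: algebra_simps)
        apply (simp only: smt)
       apply (simp add: hst)
      apply (simp add: rhot)
      done
    moreover have "even_tensor12 hr sm hs (\<lambda>u v. w1 u v - w2 u v + w3 u v)"
      using A(4-6) unfolding even_tensor12_def
      apply (intro conjI allI ballI)
          apply (simp add: algebra_simps)
         apply (simp add: algebra_simps)
        apply (simp only: smt)
       apply (simp only: smt sgn_tern)
      apply (simp add: hst)
      done
    ultimately show ?thesis by (simp add: e End_tern_def End_C_def)
  qed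
  have closM: "End_comp a b \<in> End_C hr sm hs rho"
    if "a \<in> End_C hr sm hs rho" "b \<in> End_C hr sm hs rho" for a b
  proof -
    obtain p1 w1 p2 w2 where e: "a = (p1, w1)" "b = (p2, w2)"
      by (cases a, cases b) auto
    have A: "anchored_endo sm hs rho p1" "anchored_endo sm hs rho p2"
      "even_tensor12 hr sm hs w1" "even_tensor12 hr sm hs w2"
      using that e by (auto simp: End_C_def)
    have "anchored_endo sm hs rho (p1 \<circ> p2)"
      using A(1-2) unfolding anchored_endo_def by auto
    moreover have "even_tensor12 hr sm hs (\<lambda>u v. w1 u v + w2 u v)"
      using A(3-4) unfolding even_tensor12_def
      by (auto simp: smadd sgn_smult_def hsa algebra_simps)
    ultimately show ?thesis by (simp add: e End_comp_def End_C_def)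
  qed
  have dist: "End_comp a (End_tern b c d) = End_tern (End_comp a b) (End_comp a c) (End_comp a d)"
    if "a \<in> End_C hr sm hs rho" for a b c d
  proof -
    have "\<forall>u v. fst a (u + v) = fst a u + fst a v"
      using that by (auto simp: End_C_def anchored_endo_def)
    then have "fst a (x - y + z) = fst a x - fst a y + fst a z" for x y z
      by (rule add_tern)
    then show ?thesis by (simp add: End_comp_def End_tern_def fun_eq_iff algebra_simps)
  qed
  show ?thesis
    unfolding truss_def abelian_heap_def heap_def
    using closT closM dist
    by (auto simp: End_tern_def End_comp_def fun_eq_iff algebra_simps)
qed

end
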